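(* Let $G=(V_1,E_1)$ and $H=(V_2,E_2)$ be digraphs with weak NU polymorphisms $t_1$ and $t_2$ respectively, both of the same arity $n$. Define $w$ on $V_1\dot\cup V_2$ by $w(x_1,\dots,x_n)=t_1(x_1,\dots,x_n)$ if $x_1,\dots,x_n\in V_1$; $w(x_1,\dots,x_n)=t_2(x_1,\dots,x_n)$ if $x_1,\dots,x_n\in V_2$; and otherwise $w(x_1,\dots,x_n)=x_i$ where $i$ is minimal with $x_i\in V_1$. Then $w$ is a weak NU polymorphism of $G\mathbin{\dot\cup}H$ and of $G\mathbin{\overline{\cup}}H$.
   Context: Digraphs are finite and loopless. $G\mathbin{\dot\cup}H$ is the disjoint union digraph on $V_1\dot\cup V_2$ with edges $E_1\cup E_2$; $G\mathbin{\overline{\cup}}H$ is the same structure with two additional unary relations interpreted as $V_1$ and $V_2$. A polymorphism of arity $n$ of a structure is a map from $n$-tuples of elements to elements which, applied coordinatewise to any $n$ tuples of a relation, yields a tuple of that relation. A weak NU polymorphism is an idempotent polymorphism $w$ of arity $n>1$ with $w(y,x,\dots,x)=w(x,y,x,\dots,x)=\dots=w(x,\dots,x,y)$ for all $x,y$. *)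

theory Defs
  imports Main
begin

definition digraph :: "'a set \<Rightarrow> ('a \<times> 'a) set \<Rightarrow> bool" where
  "digraph V E \<longleftrightarrow> finite V \<and> E \<subseteq> V \<times> V \<and> (\<forall>x. (x, x) \<notin> E)"

text \<open>Relational structure with domain V, one binary relation E and a set Us of unary relations.
  An n-ary operation is a map on lists of length n (n-tuples).\<close>
definition polymorphism :: "'a set \<Rightarrow> ('a \<times> 'a) set \<Rightarrow> 'a set set \<Rightarrow> nat \<Rightarrow> ('a list \<Rightarrow> 'a) \<Rightarrow> bool" where
  "polymorphism V E Us n f \<longleftrightarrow>
     (\<forall>xs. length xs = n \<and> set xs \<subseteq> V \<longrightarrow> f xs \<in> V) \<and>
     (\<forall>xs ys. length xs = n \<and> length ys = n \<and> (\<forall>i<n. (xs ! i, ys ! i) \<in> E) \<longrightarrow> (f xs, f ys) \<in> E) \<and>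
     (\<forall>U\<in>Us. \<forall>xs. length xs = n \<and> set xs \<subseteq> U \<longrightarrow> f xs \<in> U)"

definition weak_nu_polymorphism :: "'a set \<Rightarrow> ('a \<times> 'a) set \<Rightarrow> 'a set set \<Rightarrow> nat \<Rightarrow> ('a list \<Rightarrow> 'a) \<Rightarrow> bool" where
  "weak_nu_polymorphism V E Us n f \<longleftrightarrow>
     n > 1 \<and> polymorphism V E Us n f \<and>
     (\<forall>x\<in>V. f (replicate n x) = x) \<and>
     (\<forall>x\<in>V. \<forall>y\<in>V. \<forall>i<n. \<forall>j<n. f ((replicate n x)[i := y]) = f ((replicate n x)[j := y]))"

definition dunion_V :: "'a set \<Rightarrow> 'b set \<Rightarrow> ('a + 'b) set" where
  "dunion_V V1 V2 = Inl ` V1 \<union> Inr ` V2"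

definition dunion_E :: "('a \<times> 'a) set \<Rightarrow> ('b \<times> 'b) set \<Rightarrow> (('a + 'b) \<times> ('a + 'b)) set" where
  "dunion_E E1 E2 = (\<lambda>(x, y). (Inl x, Inl y)) ` E1 \<union> (\<lambda>(x, y). (Inr x, Inr y)) ` E2"

definition comb_op :: "nat \<Rightarrow> ('a list \<Rightarrow> 'a) \<Rightarrow> ('b list \<Rightarrow> 'b) \<Rightarrow> ('a + 'b) list \<Rightarrow> 'a + 'b" where
  "comb_op n t1 t2 xs =
     (if \<forall>x\<in>set xs. isl x then Inl (t1 (map projl xs))
      else if \<forall>x\<in>set xs. \<not> isl x then Inr (t2 (map projr xs))
      else xs ! (LEAST i. i < n \<and> isl (xs ! i)))"

end

theory Submission
  imports Defs
begin

lemma least_mixed: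
  assumes "length xs = n" "\<exists>x\<in>set xs. isl x"
  shows "(LEAST i. i < n \<and> isl (xs ! i)) < n \<and> isl (xs ! (LEAST i. i < n \<and> isl (xs ! i)))"
proof -
  from assms obtain i where "i < n" "isl (xs ! i)" by (auto simp: in_set_conv_nth)
  then show ?thesis by (metis (mono_tags, lifting) LeastI)
qed

lemma allnot_isl: "\<not> (\<forall>x\<in>set xs. isl x) \<Longrightarrow> (\<forall>x\<in>set xs. \<not> isl x) \<Longrightarrow>
   comb_op n t1 t2 xs = Inr (t2 (map projr xs))"
  unfolding comb_op_def by auto

lemma all_isl: "(\<forall>x\<in>set xs. isl x) \<Longrightarrow> comb_op n t1 t2 xs = Inl (t1 (map projl xs))"
  unfolding comb_op_def by auto

lemma mixed_val:
  assumes "\<not> (\<forall>x\<in>set xs. isl x)" "\<not> (\<forall>x\<in>set xs. \<not> isl x)" "length xs = n"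
  shows "comb_op n t1 t2 xs \<in> set xs \<and> isl (comb_op n t1 t2 xs)"
proof -
  have "\<exists>x\<in>set xs. isl x" using assms(2) by blast
  from least_mixed[OF assms(3) this] show ?thesis
    using assms(1,2,3) unfolding comb_op_def by (auto simp: nth_mem)
qed

lemma dv_l: "z \<in> dunion_V V1 V2 \<Longrightarrow> isl z \<Longrightarrow> projl z \<in> V1"
  unfolding dunion_V_def by auto

lemma dv_r: "z \<in> dunion_V V1 V2 \<Longrightarrow> \<not> isl z \<Longrightarrow> projr z \<in> V2"
  unfolding dunion_V_def by auto

lemma dom_lem:
  assumes p1: "polymorphism V1 E1 {} n t1" and p2: "polymorphism V2 E2 {} n t2"
    and xs: "length xs = n" "set xs \<subseteq> dunion_V V1 V2"
  shows "comb_op n t1 t2 xs \<in> dunion_V V1 V2"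
proof (cases "\<forall>x\<in>set xs. isl x")
  case True
  have "set (map projl xs) \<subseteq> V1"
  proof
    fix a assume "a \<in> set (map projl xs)"
    then obtain z where z: "z \<in> set xs" "a = projl z" by auto
    show "a \<in> V1" using True xs(2) z dv_l by blast
  qed
  with p1 xs(1) have "t1 (map projl xs) \<in> V1" unfolding polymorphism_def by auto
  then show ?thesis using all_isl[OF True] by (simp add: dunion_V_def)
next
  case False
  show ?thesis
  proof (cases "\<forall>x\<in>set xs. \<not> isl x")
    case True
    have "set (map projr xs) \<subseteq> V2"
    proof
      fix a assume "a \<in> set (map projr xs)"
      then obtain z where z: "z \<in> set xs" "a = projr z" by auto
      show "a \<in> V2" using True xs(2) z dv_r by blast
    qed
    with p2 xs(1) have "t2 (map projr xs) \<in> V2" unfolding polymorphism_def by auto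
    then show ?thesis using allnot_isl[OF False True] by (simp add: dunion_V_def)
  next
    case F2: False
    from mixed_val[OF False F2 xs(1)] xs(2) show ?thesis by blast
  qed
qed

lemma edge_isl: "(a, b) \<in> dunion_E E1 E2 \<Longrightarrow> isl a = isl b"
  unfolding dunion_E_def by auto

lemma edge_l: "(Inl a, Inl b) \<in> dunion_E E1 E2 \<Longrightarrow> (a, b) \<in> E1"
  unfolding dunion_E_def by auto

lemma edge_r: "(Inr a, Inr b) \<in> dunion_E E1 E2 \<Longrightarrow> (a, b) \<in> E2"
  unfolding dunion_E_def by auto

lemma edge_lem:
  assumes p1: "polymorphism V1 E1 {} n t1" and p2: "polymorphism V2 E2 {} n t2"
    and l: "length xs = n" "length ys = n"
    and e: "\<forall>i<n. (xs ! i, ys ! i) \<in> dunion_E E1 E2"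
  shows "(comb_op n t1 t2 xs, comb_op n t1 t2 ys) \<in> dunion_E E1 E2"
proof -
  have iseq: "\<forall>i<n. isl (xs ! i) = isl (ys ! i)" using e edge_isl by blast
  have A: "(\<forall>x\<in>set xs. isl x) = (\<forall>x\<in>set ys. isl x)"
    using iseq l by (simp add: all_set_conv_all_nth)
  have B: "(\<forall>x\<in>set xs. \<not> isl x) = (\<forall>x\<in>set ys. \<not> isl x)"
    using iseq l by (simp add: all_set_conv_all_nth)
  show ?thesis
  proof (cases "\<forall>x\<in>set xs. isl x")
    case True
    have "\<forall>i<n. (map projl xs ! i, map projl ys ! i) \<in> E1"
    proof (intro allI impI)
      fix i assume i: "i < n"
      have "isl (xs ! i)" "isl (ys ! i)" using True A l i by (auto simp: nth_mem)
      then obtain a b where "xs ! i = Inl a" "ys ! i = Inl b" by (metis isl_def)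
      note ab = this
      have "(xs ! i, ys ! i) \<in> dunion_E E1 E2" using e i by blast
      then have "(a, b) \<in> E1" using ab edge_l by metis
      then show "(map projl xs ! i, map projl ys ! i) \<in> E1" using ab i l by simp
    qed
    with p1 l have "(t1 (map projl xs), t1 (map projl ys)) \<in> E1"
      unfolding polymorphism_def by auto
    then show ?thesis using all_isl[OF True] all_isl[of ys] True A
      by (auto simp: dunion_E_def)
  next
    case False
    show ?thesis
    proof (cases "\<forall>x\<in>set xs. \<not> isl x")
      case True
      have "\<forall>i<n. (map projr xs ! i, map projr ys ! i) \<in> E2"
      proof (intro allI impI)
        fix i assume i: "i < n"
        have "\<not> isl (xs ! i)" "\<not> isl (ys ! i)" using True B l i by (auto simp: nth_mem)
        then obtain a b where "xs ! i = Inr a" "ys ! i = Inr b" by (metis sum.collapse(2))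
          note ab = this
        have "(xs ! i, ys ! i) \<in> dunion_E E1 E2" using e i by blast
        then have "(a, b) \<in> E2" using ab edge_r by metis
        then show "(map projr xs ! i, map projr ys ! i) \<in> E2" using ab i l by simp
      qed
      with p2 l have "(t2 (map projr xs), t2 (map projr ys)) \<in> E2"
        unfolding polymorphism_def by auto
      then show ?thesis using allnot_isl[OF False True] allnot_isl[of ys] True B False A
        by (auto simp: dunion_E_def)
    next
      case F2: False
      have "comb_op n t1 t2 xs = xs ! (LEAST i. i < n \<and> isl (xs ! i))"
        using False F2 unfolding comb_op_def by auto
      moreover have "comb_op n t1 t2 ys = ys ! (LEAST i. i < n \<and> isl (ys ! i))"
        using False F2 A B unfolding comb_op_def by auto
      moreover have "(LEAST i. i < n \<and> isl (ys ! i)) = (LEAST i. i < n \<and> isl (xs ! i))"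
        using iseq by metis
      moreover have "(LEAST i. i < n \<and> isl (xs ! i)) < n"
        using least_mixed[OF l(1)] F2 by blast
      ultimately show ?thesis using e by auto
    qed
  qed
qed

lemma unary_lem:
  assumes p1: "polymorphism V1 E1 {} n t1" and p2: "polymorphism V2 E2 {} n t2"
    and n: "n > 1"
    and U: "U \<in> {Inl ` V1, Inr ` V2}" and xs: "length xs = n" "set xs \<subseteq> U"
  shows "comb_op n t1 t2 xs \<in> U"
proof -
  have ne: "xs \<noteq> []" using n xs by auto
  have sub: "set xs \<subseteq> dunion_V V1 V2" using U xs(2) by (auto simp: dunion_V_def)
  show ?thesis
  proof (cases "U = Inl ` V1")
    case True
    then have "\<forall>x\<in>set xs. isl x" using xs by auto
    moreover have "comb_op n t1 t2 xs \<in> dunion_V V1 V2" using dom_lem[OF p1 p2 xs(1) sub] .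
    ultimately have "Inl (t1 (map projl xs)) \<in> dunion_V V1 V2" using all_isl by metis
    then have "t1 (map projl xs) \<in> V1" using dv_l[of "Inl (t1 (map projl xs))"] by simp
    then show ?thesis using all_isl \<open>\<forall>x\<in>set xs. isl x\<close> True by (metis image_eqI)
  next
    case False
    then have U2: "U = Inr ` V2" using U by auto
    then have all: "\<forall>x\<in>set xs. \<not> isl x" using xs by auto
    then have "\<not> (\<forall>x\<in>set xs. isl x)" using ne by (metis list.set_intros(1) neq_Nil_conv)
    moreover have "comb_op n t1 t2 xs \<in> dunion_V V1 V2" using dom_lem[OF p1 p2 xs(1) sub] .
    ultimately have "Inr (t2 (map projr xs)) \<in> dunion_V V1 V2" using allnot_isl all by metis
    then have "t2 (map projr xs) \<in> V2" using dv_r[of "Inr (t2 (map projr xs))"] by simp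
    then show ?thesis using allnot_isl \<open>\<not> (\<forall>x\<in>set xs. isl x)\<close> all U2 by (metis image_eqI)
  qed
qed

lemma idem_lem:
  assumes w1: "weak_nu_polymorphism V1 E1 {} n t1" and w2: "weak_nu_polymorphism V2 E2 {} n t2"
    and x: "x \<in> dunion_V V1 V2"
  shows "comb_op n t1 t2 (replicate n x) = x"
proof -
  have n: "n > 1" using w1 unfolding weak_nu_polymorphism_def by auto
  show ?thesis
  proof (cases x)
    case (Inl a)
    then have "a \<in> V1" using x by (auto simp: dunion_V_def)
    then show ?thesis using Inl w1 all_isl[of "replicate n x"]
      by (auto simp: weak_nu_polymorphism_def map_replicate)
  next
    case (Inr a)
    then have "a \<in> V2" using x by (auto simp: dunion_V_def)
    moreover have "\<not> (\<forall>z\<in>set (replicate n x). isl z)" using n Inr by auto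
    moreover have "\<forall>z\<in>set (replicate n x). \<not> isl z" using Inr by auto
    ultimately show ?thesis using Inr w2 allnot_isl[of "replicate n x"]
      by (auto simp: weak_nu_polymorphism_def map_replicate)
  qed
qed

lemma nu_val:
  assumes w1: "weak_nu_polymorphism V1 E1 {} n t1" and w2: "weak_nu_polymorphism V2 E2 {} n t2"
    and x: "x \<in> dunion_V V1 V2" and y: "y \<in> dunion_V V1 V2" and i: "i < n"
  shows "comb_op n t1 t2 ((replicate n x)[i := y]) =
     (if isl x \<and> isl y then Inl (t1 ((replicate n (projl x))[0 := projl y]))
      else if \<not> isl x \<and> \<not> isl y then Inr (t2 ((replicate n (projr x))[0 := projr y]))
      else if isl x then x else y)"
proof -
  have n: "n > 1" using w1 unfolding weak_nu_polymorphism_def by auto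
  define zs where "zs = (replicate n x)[i := y]"
  have lz: "length zs = n" by (simp add: zs_def)
  have sz: "set zs \<subseteq> {x, y}" unfolding zs_def
    using set_update_subset_insert[of "replicate n x" i y] by auto
  have yz: "y \<in> set zs" unfolding zs_def using i by (simp add: set_update_memI)
  define k :: nat where "k = (if i = 0 then 1 else 0)"
  have k: "k < n" "k \<noteq> i" using n by (auto simp: k_def)
  have xz: "x \<in> set zs" unfolding zs_def using k
    by (metis length_list_update length_replicate nth_list_update_neq nth_mem nth_replicate)
  have mapl: "map projl zs = (replicate n (projl x))[i := projl y]"
    by (simp add: zs_def map_update map_replicate)
  have mapr: "map projr zs = (replicate n (projr x))[i := projr y]"
    by (simp add: zs_def map_update map_replicate)
  show ?thesis
  proof (cases "isl x \<and> isl y")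
    case True
    then have "\<forall>z\<in>set zs. isl z" using sz by auto
    then have "comb_op n t1 t2 zs = Inl (t1 ((replicate n (projl x))[i := projl y]))"
      using all_isl mapl by metis
    moreover have "projl x \<in> V1" "projl y \<in> V1" using True x y
      by (auto simp: dunion_V_def)
    ultimately show ?thesis using True w1 i n unfolding zs_def weak_nu_polymorphism_def
      by (metis (no_types, lifting) One_nat_def gr_implies_not0 linorder_neqE_nat)
  next
    case F1: False
    show ?thesis
    proof (cases "\<not> isl x \<and> \<not> isl y")
      case True
      then have a: "\<forall>z\<in>set zs. \<not> isl z" using sz by auto
      then have "\<not> (\<forall>z\<in>set zs. isl z)" using xz True by blast
      then have "comb_op n t1 t2 zs = Inr (t2 ((replicate n (projr x))[i := projr y]))"
        using allnot_isl a mapr by metis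
      moreover have "projr x \<in> V2" "projr y \<in> V2" using True x y
        by (auto simp: dunion_V_def)
      ultimately show ?thesis using True w2 i n unfolding zs_def weak_nu_polymorphism_def
        by (metis (no_types, lifting) gr_implies_not0 linorder_neqE_nat)
    next
      case F2: False
      have "\<not> (\<forall>z\<in>set zs. isl z)" "\<not> (\<forall>z\<in>set zs. \<not> isl z)"
        using F1 F2 xz yz by auto
      from mixed_val[OF this lz] sz have "comb_op n t1 t2 zs \<in> {x, y}"
        "isl (comb_op n t1 t2 zs)" by auto
      then show ?thesis using F1 F2 unfolding zs_def by auto
    qed
  qed
qed

lemma wnu_lem:
  assumes w1: "weak_nu_polymorphism V1 E1 {} n t1" and w2: "weak_nu_polymorphism V2 E2 {} n t2"
    and Us: "Us \<subseteq> {Inl ` V1, Inr ` V2}"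
  shows "weak_nu_polymorphism (dunion_V V1 V2) (dunion_E E1 E2) Us n (comb_op n t1 t2)"
proof -
  have n: "n > 1" and p1: "polymorphism V1 E1 {} n t1" and p2: "polymorphism V2 E2 {} n t2"
    using w1 w2 unfolding weak_nu_polymorphism_def by auto
  have P: "polymorphism (dunion_V V1 V2) (dunion_E E1 E2) Us n (comb_op n t1 t2)"
    unfolding polymorphism_def
  proof (intro conjI allI impI ballI)
    fix xs assume "length xs = n \<and> set xs \<subseteq> dunion_V V1 V2"
    then show "comb_op n t1 t2 xs \<in> dunion_V V1 V2" using dom_lem[OF p1 p2] by blast
  next
    fix xs ys assume h: "length xs = n \<and> length ys = n \<and> (\<forall>i<n. (xs ! i, ys ! i) \<in> dunion_E E1 E2)"
    then show "(comb_op n t1 t2 xs, comb_op n t1 t2 ys) \<in> dunion_E E1 E2"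
      using edge_lem[OF p1 p2] by blast
  next
    fix U xs assume "U \<in> Us" "length xs = n \<and> set xs \<subseteq> U"
    then show "comb_op n t1 t2 xs \<in> U" using unary_lem[OF p1 p2 n, of U xs] Us by blast
  qed
  have I: "\<forall>x\<in>dunion_V V1 V2. comb_op n t1 t2 (replicate n x) = x"
    using idem_lem[OF w1 w2] by blast
  have N: "\<forall>x\<in>dunion_V V1 V2. \<forall>y\<in>dunion_V V1 V2. \<forall>i<n. \<forall>j<n.
     comb_op n t1 t2 ((replicate n x)[i := y]) = comb_op n t1 t2 ((replicate n x)[j := y])"
  proof (intro ballI allI impI)
    fix x y i j assume hx: "x \<in> dunion_V V1 V2" and hy: "y \<in> dunion_V V1 V2" and hi: "i < n" and hj: "j < n"
    from nu_val[OF w1 w2 hx hy hi] nu_val[OF w1 w2 hx hy hj]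
    show "comb_op n t1 t2 ((replicate n x)[i := y]) = comb_op n t1 t2 ((replicate n x)[j := y])"
      by (rule trans[OF _ sym])
  qed
  show ?thesis unfolding weak_nu_polymorphism_def using n P I N by blast
qed

theorem lemma4p1:
  fixes V1 :: "'a set" and E1 :: "('a \<times> 'a) set" and V2 :: "'b set" and E2 :: "('b \<times> 'b) set"
    and t1 :: "'a list \<Rightarrow> 'a" and t2 :: "'b list \<Rightarrow> 'b" and n :: nat
  assumes "digraph V1 E1" and "digraph V2 E2"
    and "weak_nu_polymorphism V1 E1 {} n t1"
    and "weak_nu_polymorphism V2 E2 {} n t2"
  shows "weak_nu_polymorphism (dunion_V V1 V2) (dunion_E E1 E2) {} n (comb_op n t1 t2) \<and>
         weak_nu_polymorphism (dunion_V V1 V2) (dunion_E E1 E2) {Inl ` V1, Inr ` V2} n (comb_op n t1 t2)"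
  using wnu_lem[OF assms(3,4)] by blast

end
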